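(* The weighted transverse map $\tau:\mathfrak{V}_n\to\mathfrak{W}_n$ satisfies: (i) for all $A\in\mathrm{GL}(n,\mathbb{Z})$ and $V\in\mathfrak{V}_n$, $\tau(A\cdot V)=A^*\cdot\tau(V)$, where $A^*=(A^{-1})^T$; (ii) for all $\sigma\in\mathfrak{S}_{n+1}$ and $V\in\mathfrak{V}_n$, $\tau(\sigma(V))=\tau(V)\ast\sigma$.
   Context: For $V=(\mathbf{v}_0,\ldots,\mathbf{v}_n)\in\mathrm{Mat}(n,n+1;\mathbb{Z})$ (columns indexed $0,\ldots,n$), $V_j$ is the determinant of $V$ with column $\mathbf{v}_j$ deleted and $V^0=(\mathbf{v}_1,\ldots,\mathbf{v}_n)$. $\mathfrak{V}_n$ is the set of F-admissible matrices: all $V_j\ne0$, $\gcd(V_0,\ldots,V_n)=1$, $\sum_j|V_j|\mathbf{v}_j=0$. $\tau(V)=((V^0)^{-1})^T\cdot\mathrm{lcm}(|V_0|,\ldots,|V_n|)\,\mathrm{diag}(1/|V_1|,\ldots,1/|V_n|)$, and $\mathfrak{W}_n=\tau(\mathfrak{V}_n)$. The permutation group $\mathfrak{S}_{n+1}$ of $\{0,\ldots,n\}$ acts on $\mathfrak{V}_n$ by $\sigma(V)=(\mathbf{v}_{\sigma(0)},\ldots,\mathbf{v}_{\sigma(n)})$ (right multiplication by the permutation matrix), and on $\mathfrak{W}_n$ by: for $W=(\mathbf{w}_1,\ldots,\mathbf{w}_n)$ and $\mathbf{w}_0:=\mathbf{0}$, $W\ast\sigma=(\mathbf{w}_{\sigma(1)}-\mathbf{w}_{\sigma(0)},\ldots,\mathbf{w}_{\sigma(n)}-\mathbf{w}_{\sigma(0)})$.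 *)

theory Defs
  imports "Jordan_Normal_Form.Determinant" "Jordan_Normal_Form.Gauss_Jordan_Elimination"
begin

(* Matrices are Jordan_Normal_Form matrices; columns of an n x (n+1) matrix are
   indexed 0..n (JNF indices 0..n), columns of an n x n matrix W=(w_1..w_n) are
   stored at JNF indices 0..n-1 (w_k = col W (k-1)). *)

definition del_col :: "'a mat \<Rightarrow> nat \<Rightarrow> 'a mat" where
  "del_col V j = mat (dim_row V) (dim_col V - 1)
     (\<lambda>(i,k). V $$ (i, if k < j then k else Suc k))"

definition Vminor :: "int mat \<Rightarrow> nat \<Rightarrow> int" where
  "Vminor V j = det (del_col V j)"

definition Vzero :: "int mat \<Rightarrow> int mat" where
  "Vzero V = del_col V 0"

definition F_admissible :: "nat \<Rightarrow> int mat set" where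
  "F_admissible n = {V. V \<in> carrier_mat n (n+1)
      \<and> (\<forall>j\<le>n. Vminor V j \<noteq> 0)
      \<and> Gcd {Vminor V j | j. j \<le> n} = 1
      \<and> finsum_vec TYPE(int) n (\<lambda>j. \<bar>Vminor V j\<bar> \<cdot>\<^sub>v col V j) {0..n} = 0\<^sub>v n}"

definition mat_inv :: "rat mat \<Rightarrow> rat mat" where
  "mat_inv M = the (mat_inverse M)"

definition tau :: "int mat \<Rightarrow> rat mat" where
  "tau V = (let n = dim_row V;
               L = Lcm {\<bar>Vminor V j\<bar> | j. j \<le> n}
           in transpose_mat (mat_inv (map_mat rat_of_int (Vzero V)))
              * mat_diag n (\<lambda>i. rat_of_int L / rat_of_int \<bar>Vminor V (Suc i)\<bar>))"

definition GLZ :: "nat \<Rightarrow> int mat set" where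
  "GLZ n = {A. A \<in> carrier_mat n n \<and> invertible_mat A}"

definition dual_mat :: "int mat \<Rightarrow> rat mat" where
  "dual_mat A = transpose_mat (mat_inv (map_mat rat_of_int A))"

definition perm_cols :: "'a mat \<Rightarrow> (nat \<Rightarrow> nat) \<Rightarrow> 'a mat" where
  "perm_cols V \<sigma> = mat (dim_row V) (dim_col V) (\<lambda>(i,k). V $$ (i, \<sigma> k))"

definition wcol :: "rat mat \<Rightarrow> nat \<Rightarrow> rat vec" where
  "wcol W k = (if k = 0 then 0\<^sub>v (dim_row W) else col W (k - 1))"

definition W_act :: "rat mat \<Rightarrow> (nat \<Rightarrow> nat) \<Rightarrow> rat mat" where
  "W_act W \<sigma> = mat (dim_row W) (dim_col W)
     (\<lambda>(i,k). (wcol W (\<sigma> (Suc k)) - wcol W (\<sigma> 0)) $ i)"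

end

theory Submission imports Defs begin

lemma del_col_carrier: "V \<in> carrier_mat n (Suc n) \<Longrightarrow> del_col V j \<in> carrier_mat n n"
  unfolding del_col_def by auto

lemma del_col_index: "V \<in> carrier_mat n (Suc n) \<Longrightarrow> r < n \<Longrightarrow> k < n \<Longrightarrow>
   del_col V j $$ (r,k) = V $$ (r, insert_index j k)"
  unfolding del_col_def insert_index_def by auto

lemma del_col_mult: assumes A: "A \<in> carrier_mat n n" and V: "V \<in> carrier_mat n (Suc n)"
  shows "del_col (A * V) j = A * del_col V j"
proof -
  have AV: "A * V \<in> carrier_mat n (Suc n)" using A V by auto
  have D: "del_col V j \<in> carrier_mat n n" using del_col_carrier[OF V] .
  show ?thesis
  proof (rule eq_matI)
    fix r k assume r: "r < dim_row (A * del_col V j)" and k: "k < dim_col (A * del_col V j)"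
    then have r: "r < n" and k: "k < n" using A D by auto
    have ik: "insert_index j k < Suc n" unfolding insert_index_def using k by auto
    show "del_col (A * V) j $$ (r, k) = (A * del_col V j) $$ (r, k)"
      unfolding del_col_index[OF AV r k]
      using A V r k ik D
      by (auto simp: scalar_prod_def del_col_index intro!: sum.cong)
  qed (insert A V D, auto simp: del_col_def)
qed

lemma Vminor_mult: assumes A: "A \<in> carrier_mat n n" and V: "V \<in> carrier_mat n (Suc n)"
  shows "Vminor (A * V) j = det A * Vminor V j"
  unfolding Vminor_def del_col_mult[OF A V] by (rule det_mult[OF A del_col_carrier[OF V]])

lemma GLZ_det: assumes "A \<in> GLZ n" shows "\<bar>det A\<bar> = 1"
proof -
  from assms have A: "A \<in> carrier_mat n n" and inv: "invertible_mat A" unfolding GLZ_def by auto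
  from inv obtain B where AB: "A * B = 1\<^sub>m (dim_row A)" and BA: "B * A = 1\<^sub>m (dim_row B)"
    unfolding invertible_mat_def inverts_mat_def by auto
  have "dim_col B = n" using AB A by (metis index_mult_mat(3) index_one_mat(3) carrier_matD)
  moreover have "dim_row B = n" using BA A by (metis index_mult_mat(3) index_one_mat(3) carrier_matD)
  ultimately have B: "B \<in> carrier_mat n n" by auto
  have "det A * det B = 1" using det_mult[OF A B] AB A by auto
  then show ?thesis using zmult_eq_1_iff by auto
qed

lemma mat_inv_props: assumes M: "M \<in> carrier_mat n n" and d: "det M \<noteq> (0::rat)"
  shows "mat_inv M \<in> carrier_mat n n \<and> M * mat_inv M = 1\<^sub>m n \<and> mat_inv M * M = 1\<^sub>m n"
proof -
  obtain B where B: "mat_inverse M = Some B"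
  proof (cases "mat_inverse M")
    case None
    have "M \<in> Units (ring_mat TYPE(rat) n ())" by (rule det_non_zero_imp_unit[OF M d])
    with mat_inverse(1)[OF M None, where b="()"] show ?thesis by blast
  qed
  then show ?thesis using mat_inverse(2)[OF M B] unfolding mat_inv_def by auto
qed

lemma inv_unique: fixes P X Y :: "rat mat" assumes P: "P \<in> carrier_mat n n" and Y: "Y \<in> carrier_mat n n"
  and X: "X \<in> carrier_mat n n" and YP: "Y * P = 1\<^sub>m n" and PX: "P * X = 1\<^sub>m n"
  shows "X = Y"
proof -
  have "X = (Y * P) * X" using left_mult_one_mat[OF X] YP by simp
  also have "\<dots> = Y * (P * X)" using assoc_mult_mat[OF Y P X] .
  also have "\<dots> = Y" using PX Y by auto
  finally show ?thesis .
qed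

definition Lc :: "int mat \<Rightarrow> nat \<Rightarrow> int" where
  "Lc V n = Lcm {\<bar>Vminor V j\<bar> | j. j \<le> n}"

definition Dg :: "int mat \<Rightarrow> nat \<Rightarrow> rat mat" where
  "Dg V n = mat_diag n (\<lambda>i. rat_of_int (Lc V n) / rat_of_int \<bar>Vminor V (Suc i)\<bar>)"

definition Mq :: "int mat \<Rightarrow> rat mat" where
  "Mq V = map_mat rat_of_int (Vzero V)"

lemma tau_alt: "V \<in> carrier_mat n (Suc n) \<Longrightarrow> tau V = transpose_mat (mat_inv (Mq V)) * Dg V n"
  unfolding tau_def Let_def Dg_def Lc_def Mq_def by auto

lemma Mq_carrier: "V \<in> carrier_mat n (Suc n) \<Longrightarrow> Mq V \<in> carrier_mat n n"
  unfolding Mq_def Vzero_def using del_col_carrier by auto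

lemma Mq_det: "V \<in> carrier_mat n (Suc n) \<Longrightarrow> det (Mq V) = rat_of_int (Vminor V 0)"
  unfolding Mq_def Vminor_def Vzero_def by (simp add: of_int_hom.hom_det)

lemma Dg_transpose: "transpose_mat (Dg V n) = Dg V n"
  unfolding Dg_def mat_diag_def by (rule eq_matI, auto)

lemma part1: assumes A: "A \<in> GLZ n" and V: "V \<in> F_admissible n"
  shows "tau (A * V) = dual_mat A * tau V"
proof -
  have Ac: "A \<in> carrier_mat n n" using A unfolding GLZ_def by auto
  have Vc: "V \<in> carrier_mat n (Suc n)" and V0: "Vminor V 0 \<noteq> 0"
    using V unfolding F_admissible_def by auto
  have AVc: "A * V \<in> carrier_mat n (Suc n)" using Ac Vc by auto
  have dA: "\<bar>det A\<bar> = 1" by (rule GLZ_det[OF A])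
  have absm: "\<bar>Vminor (A * V) j\<bar> = \<bar>Vminor V j\<bar>" for j
    unfolding Vminor_mult[OF Ac Vc] abs_mult dA by simp
  have Lceq: "Lc (A * V) n = Lc V n" unfolding Lc_def absm ..
  have Dgeq: "Dg (A * V) n = Dg V n" unfolding Dg_def Lceq absm ..
  define A' where "A' = map_mat rat_of_int A"
  define M where "M = Mq V"
  have A'c: "A' \<in> carrier_mat n n" using Ac unfolding A'_def by auto
  have Mc: "M \<in> carrier_mat n n" using Mq_carrier[OF Vc] unfolding M_def .
  have Mqeq: "Mq (A * V) = A' * M"
    unfolding Mq_def M_def A'_def Vzero_def del_col_mult[OF Ac Vc]
    by (rule of_int_hom.mat_hom_mult[OF Ac del_col_carrier[OF Vc]])
  have dA': "det A' \<noteq> 0" unfolding A'_def using dA by (auto simp: of_int_hom.hom_det)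
  have dM: "det M \<noteq> 0" unfolding M_def Mq_det[OF Vc] using V0 by auto
  have dAM: "det (A' * M) \<noteq> 0" using det_mult[OF A'c Mc] dA' dM by auto
  note IA = mat_inv_props[OF A'c dA']
  note IM = mat_inv_props[OF Mc dM]
  note IAM = mat_inv_props[OF mult_carrier_mat[OF A'c Mc] dAM]
  have "(mat_inv M * mat_inv A') * (A' * M) = mat_inv M * (mat_inv A' * (A' * M))"
    using IA IM A'c Mc by (meson assoc_mult_mat mult_carrier_mat)
  also have "mat_inv A' * (A' * M) = (mat_inv A' * A') * M"
    using assoc_mult_mat[OF IA[THEN conjunct1] A'c Mc] by simp
  also have "\<dots> = M" using IA Mc by simp
  also have "mat_inv M * M = 1\<^sub>m n" using IM by simp
  finally have "mat_inv (A' * M) = mat_inv M * mat_inv A'"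
    using inv_unique[OF mult_carrier_mat[OF A'c Mc] mult_carrier_mat[of _ n n _ n] _ _] IA IM IAM
    by blast
  then have "tau (A * V) = transpose_mat (mat_inv M * mat_inv A') * Dg V n"
    unfolding tau_alt[OF AVc] Mqeq Dgeq by simp
  also have "\<dots> = (transpose_mat (mat_inv A') * transpose_mat (mat_inv M)) * Dg V n"
    using IA IM by (metis transpose_mult)
  also have "\<dots> = transpose_mat (mat_inv A') * (transpose_mat (mat_inv M) * Dg V n)"
    using IA IM by (auto intro!: assoc_mult_mat[of _ n n _ n _ n] simp: Dg_def)
  finally show ?thesis unfolding tau_alt[OF Vc] dual_mat_def A'_def M_def .
qed

lemma perm_minor: assumes s: "\<sigma> permutes {0..n}" and Vc: "V \<in> carrier_mat n (Suc n)"
  and j: "j \<le> n"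
  shows "\<bar>Vminor (perm_cols V \<sigma>) j\<bar> = \<bar>Vminor V (\<sigma> j)\<bar>"
proof -
  have s': "\<sigma> permutes {0..<Suc n}" using s atLeastLessThanSuc_atLeastAtMost by simp
  define \<rho> where "\<rho> = permutation_delete \<sigma> j"
  have r: "\<rho> permutes {0..<n}" unfolding \<rho>_def
    by (rule permutation_delete_permutes[OF s']) (use j in auto)
  define C where "C = del_col V (\<sigma> j)"
  have Cc: "C \<in> carrier_mat n n" unfolding C_def by (rule del_col_carrier[OF Vc])
  have Uc: "perm_cols V \<sigma> \<in> carrier_mat n (Suc n)" using Vc unfolding perm_cols_def by auto
  have sj: "\<sigma> j < Suc n" using s' j by (simp add: permutes_in_image)
  have eq: "transpose_mat (del_col (perm_cols V \<sigma>) j) = mat n n (\<lambda>(i,k). transpose_mat C $$ (\<rho> i, k))"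
  proof (rule eq_matI)
    fix i k assume i: "i < dim_row (mat n n (\<lambda>(i,k). transpose_mat C $$ (\<rho> i, k)))"
      and k: "k < dim_col (mat n n (\<lambda>(i,k). transpose_mat C $$ (\<rho> i, k)))"
    then have i: "i < n" and k: "k < n" by auto
    have ii: "insert_index j i < Suc n" unfolding insert_index_def using i by auto
    have ne: "insert_index j i \<noteq> j" unfolding insert_index_def by auto
    have sne: "\<sigma> (insert_index j i) \<noteq> \<sigma> j"
      using ne injD[OF permutes_inj[OF s']] by blast
    have ri: "\<rho> i < n" using r i by (simp add: permutes_in_image)
    have rv: "\<rho> i = delete_index (\<sigma> j) (\<sigma> (insert_index j i))"
      unfolding \<rho>_def permutation_delete_def delete_ran_def delete_dom_def by simp
    have si: "\<sigma> (insert_index j i) < Suc n" using s' ii by (simp add: permutes_in_image)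
    show "transpose_mat (del_col (perm_cols V \<sigma>) j) $$ (i, k) = mat n n (\<lambda>(i,k). transpose_mat C $$ (\<rho> i, k)) $$ (i, k)"
    proof -
      have "transpose_mat (del_col (perm_cols V \<sigma>) j) $$ (i, k) = del_col (perm_cols V \<sigma>) j $$ (k, i)"
        using del_col_carrier[OF Uc, of j] i k by auto
      also have "\<dots> = perm_cols V \<sigma> $$ (k, insert_index j i)" by (rule del_col_index[OF Uc k i])
      also have "\<dots> = V $$ (k, \<sigma> (insert_index j i))" using Vc k ii unfolding perm_cols_def by auto
      also have "\<dots> = C $$ (k, \<rho> i)" 
        using del_col_index[OF Vc k ri, of "\<sigma> j"] unfolding C_def rv insert_delete_index[OF sne] by simp
      also have "\<dots> = mat n n (\<lambda>(i,k). transpose_mat C $$ (\<rho> i, k)) $$ (i, k)"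
        using Cc i k ri by auto
      finally show ?thesis .
    qed
  qed (insert del_col_carrier[OF Uc, of j], auto)
  have "det (del_col (perm_cols V \<sigma>) j) = det (transpose_mat (del_col (perm_cols V \<sigma>) j))"
    by (rule det_transpose[symmetric], rule del_col_carrier[OF Uc])
  also have "\<dots> = signof \<rho> * det (transpose_mat C)"
    unfolding eq by (rule det_permute_rows[OF _ r], insert Cc, auto)
  also have "det (transpose_mat C) = det C" by (rule det_transpose[OF Cc])
  finally have "det (del_col (perm_cols V \<sigma>) j) = signof \<rho> * det C" .
  then show ?thesis unfolding Vminor_def C_def abs_mult by (simp add: sign_def)
qed

lemma perm_Lc: assumes s: "\<sigma> permutes {0..n}" and Vc: "V \<in> carrier_mat n (Suc n)"
  shows "Lc (perm_cols V \<sigma>) n = Lc V n"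
proof -
  have "{\<bar>Vminor (perm_cols V \<sigma>) j\<bar> | j. j \<le> n} = {\<bar>Vminor V j\<bar> | j. j \<le> n}"
  proof (intro equalityI subsetI)
    fix x assume "x \<in> {\<bar>Vminor (perm_cols V \<sigma>) j\<bar> | j. j \<le> n}"
    then obtain j where j: "j \<le> n" and x: "x = \<bar>Vminor (perm_cols V \<sigma>) j\<bar>" by auto
    have "\<sigma> j \<le> n" using permutes_in_image[OF s, of j] j by auto
    then show "x \<in> {\<bar>Vminor V j\<bar> | j. j \<le> n}" unfolding x perm_minor[OF s Vc j] by auto
  next
    fix x assume "x \<in> {\<bar>Vminor V j\<bar> | j. j \<le> n}"
    then obtain j where j: "j \<le> n" and x: "x = \<bar>Vminor V j\<bar>" by auto
    have ij: "Hilbert_Choice.inv \<sigma> j \<le> n" using permutes_in_image[OF permutes_inv[OF s], of j] j by auto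
    have "\<sigma> (Hilbert_Choice.inv \<sigma> j) = j" using permutes_inverses(1)[OF s] by simp
    then have "x = \<bar>Vminor (perm_cols V \<sigma>) (Hilbert_Choice.inv \<sigma> j)\<bar>" unfolding x perm_minor[OF s Vc ij] by simp
    then show "x \<in> {\<bar>Vminor (perm_cols V \<sigma>) j\<bar> | j. j \<le> n}" using ij by auto
  qed
  then show ?thesis unfolding Lc_def by simp
qed

lemma Dg_index: "k < n \<Longrightarrow> i < n \<Longrightarrow> Dg V n $$ (k, i) =
   (if k = i then rat_of_int (Lc V n) / rat_of_int \<bar>Vminor V (Suc i)\<bar> else 0)"
  unfolding Dg_def mat_diag_def by auto

lemma Dg_carrier: "Dg V n \<in> carrier_mat n n" unfolding Dg_def by auto

lemma tau_prop: assumes Vc: "V \<in> carrier_mat n (Suc n)" and V0: "Vminor V 0 \<noteq> 0"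
  shows "tau V \<in> carrier_mat n n"
    "\<And>k i. k < n \<Longrightarrow> i < n \<Longrightarrow> (\<Sum>r<n. tau V $$ (r,k) * rat_of_int (V $$ (r, Suc i)))
        = (if k = i then rat_of_int (Lc V n) / rat_of_int \<bar>Vminor V (Suc i)\<bar> else 0)"
proof -
  define M where "M = Mq V"
  have Mc: "M \<in> carrier_mat n n" using Mq_carrier[OF Vc] unfolding M_def .
  have dM: "det M \<noteq> 0" unfolding M_def Mq_det[OF Vc] using V0 by auto
  note IM = mat_inv_props[OF Mc dM]
  have IMc: "mat_inv M \<in> carrier_mat n n" using IM by auto
  have T: "tau V = transpose_mat (mat_inv M) * Dg V n" unfolding tau_alt[OF Vc] M_def ..
  show Tc: "tau V \<in> carrier_mat n n" unfolding T using IMc Dg_carrier by auto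
  have "transpose_mat (tau V) = Dg V n * mat_inv M"
    unfolding T by (metis transpose_mult Dg_transpose transpose_transpose IMc transpose_carrier_mat Dg_carrier)
  then have "transpose_mat (tau V) * M = Dg V n * (mat_inv M * M)"
    using assoc_mult_mat[OF Dg_carrier IMc Mc] by simp
  then have TM: "transpose_mat (tau V) * M = Dg V n" using IM right_mult_one_mat[OF Dg_carrier[of V n]] by simp
  fix k i assume k: "k < n" and i: "i < n"
  have "(transpose_mat (tau V) * M) $$ (k, i) = (\<Sum>r<n. tau V $$ (r,k) * rat_of_int (V $$ (r, Suc i)))"
    using Tc Mc k i Vc unfolding M_def Mq_def Vzero_def
    by (auto simp: scalar_prod_def del_col_index insert_index_def lessThan_atLeast0 intro!: sum.cong)
  then show "(\<Sum>r<n. tau V $$ (r,k) * rat_of_int (V $$ (r, Suc i)))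
        = (if k = i then rat_of_int (Lc V n) / rat_of_int \<bar>Vminor V (Suc i)\<bar> else 0)"
    using TM Dg_index[OF k i] by simp
qed

lemma tau_unique: assumes Vc: "V \<in> carrier_mat n (Suc n)" and V0: "Vminor V 0 \<noteq> 0"
  and Xc: "X \<in> carrier_mat n n"
  and XP: "\<And>k i. k < n \<Longrightarrow> i < n \<Longrightarrow> (\<Sum>r<n. X $$ (r,k) * rat_of_int (V $$ (r, Suc i)))
        = (if k = i then rat_of_int (Lc V n) / rat_of_int \<bar>Vminor V (Suc i)\<bar> else 0)"
  shows "tau V = X"
proof -
  define M where "M = Mq V"
  have Mc: "M \<in> carrier_mat n n" using Mq_carrier[OF Vc] unfolding M_def .
  have dM: "det M \<noteq> 0" unfolding M_def Mq_det[OF Vc] using V0 by auto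
  note IM = mat_inv_props[OF Mc dM]
  have IMc: "mat_inv M \<in> carrier_mat n n" using IM by auto
  have T: "tau V = transpose_mat (mat_inv M) * Dg V n" unfolding tau_alt[OF Vc] M_def ..
  have TM: "transpose_mat X * M = Dg V n"
  proof (rule eq_matI)
    fix k i assume "k < dim_row (Dg V n)" "i < dim_col (Dg V n)"
    then have k: "k < n" and i: "i < n" using Dg_carrier[of V n] by auto
    have "(transpose_mat X * M) $$ (k, i) = (\<Sum>r<n. X $$ (r,k) * rat_of_int (V $$ (r, Suc i)))"
      using Xc Mc k i Vc unfolding M_def Mq_def Vzero_def
      by (auto simp: scalar_prod_def del_col_index insert_index_def lessThan_atLeast0 intro!: sum.cong)
    then show "(transpose_mat X * M) $$ (k, i) = Dg V n $$ (k, i)"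
      using XP[OF k i] Dg_index[OF k i] by simp
  qed (insert Xc Mc Dg_carrier[of V n], auto)
  have XTc: "transpose_mat X \<in> carrier_mat n n" using Xc by auto
  have "transpose_mat X = transpose_mat X * (M * mat_inv M)" using IM XTc by simp
  also have "\<dots> = Dg V n * mat_inv M" using assoc_mult_mat[OF XTc Mc IMc] TM by simp
  finally have "X = transpose_mat (Dg V n * mat_inv M)" by (metis transpose_transpose)
  also have "\<dots> = tau V" unfolding T using transpose_mult[OF Dg_carrier IMc] Dg_transpose by simp
  finally show ?thesis ..
qed

lemma F_adm_rel: assumes V: "V \<in> F_admissible n" and r: "r < n"
  shows "(\<Sum>j\<in>{0..n}. \<bar>Vminor V j\<bar> * V $$ (r, j)) = 0"
proof -
  have Vc: "V \<in> carrier_mat n (Suc n)" and R: "finsum_vec TYPE(int) n (\<lambda>j. \<bar>Vminor V j\<bar> \<cdot>\<^sub>v col V j) {0..n} = 0\<^sub>v n"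
    using V unfolding F_admissible_def by auto
  have "finsum_vec TYPE(int) n (\<lambda>j. \<bar>Vminor V j\<bar> \<cdot>\<^sub>v col V j) {0..n} $ r
     = (\<Sum>j\<in>{0..n}. (\<bar>Vminor V j\<bar> \<cdot>\<^sub>v col V j) $ r)"
    by (rule index_finsum_vec[OF _ r], insert Vc, auto)
  also have "\<dots> = (\<Sum>j\<in>{0..n}. \<bar>Vminor V j\<bar> * V $$ (r, j))"
    using Vc r by (intro sum.cong) auto
  finally show ?thesis using R r by simp
qed

lemma KL: assumes V: "V \<in> F_admissible n" and a: "a \<le> n" and i: "i \<le> n"
  shows "(\<Sum>r<n. wcol (tau V) a $ r * rat_of_int (V $$ (r, i))) =
    (if a = 0 then 0 else if i = 0 then - rat_of_int (Lc V n) / rat_of_int \<bar>Vminor V 0\<bar>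
     else if a = i then rat_of_int (Lc V n) / rat_of_int \<bar>Vminor V i\<bar> else 0)"
proof -
  have Vc: "V \<in> carrier_mat n (Suc n)" and V0: "Vminor V 0 \<noteq> 0" and Vnz: "\<And>j. j \<le> n \<Longrightarrow> Vminor V j \<noteq> 0"
    using V unfolding F_admissible_def by auto
  note TP = tau_prop[OF Vc V0]
  let ?L = "rat_of_int (Lc V n)"
  show ?thesis
  proof (cases "a = 0")
    case True
    then show ?thesis unfolding wcol_def using TP(1) by (auto intro!: sum.neutral)
  next
    case False
    define w where "w r = tau V $$ (r, a - 1)" for r
    have wc: "wcol (tau V) a $ r = w r" if "r < n" for r
      unfolding wcol_def w_def using False that TP(1) a by auto
    define S where "S j = (\<Sum>r<n. w r * rat_of_int (V $$ (r, j)))" for j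
    have lhs: "(\<Sum>r<n. wcol (tau V) a $ r * rat_of_int (V $$ (r, i))) = S i"
      unfolding S_def by (rule sum.cong, auto simp: wc)
    have Sj: "S j = (if a = j then ?L / rat_of_int \<bar>Vminor V j\<bar> else 0)" if "1 \<le> j" "j \<le> n" for j
    proof -
      have "S j = (\<Sum>r<n. tau V $$ (r, a - 1) * rat_of_int (V $$ (r, Suc (j - 1))))"
        unfolding S_def w_def using that by simp
      also have "\<dots> = (if a - 1 = j - 1 then ?L / rat_of_int \<bar>Vminor V (Suc (j - 1))\<bar> else 0)"
        using TP(2)[of "a - 1" "j - 1"] False a that by simp
      finally show ?thesis using that False by (auto split: if_splits)
    qed
    show ?thesis
    proof (cases "i = 0")
      case False
      then show ?thesis using Sj[of i] i \<open>a \<noteq> 0\<close> lhs by auto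
    next
      case True
      have "(\<Sum>j\<in>{0..n}. rat_of_int \<bar>Vminor V j\<bar> * S j)
          = (\<Sum>j\<in>{0..n}. \<Sum>r<n. w r * (rat_of_int \<bar>Vminor V j\<bar> * rat_of_int (V $$ (r, j))))"
        unfolding S_def sum_distrib_left by (intro sum.cong refl) (simp add: ac_simps)
      also have "\<dots> = (\<Sum>r<n. \<Sum>j\<in>{0..n}. w r * (rat_of_int \<bar>Vminor V j\<bar> * rat_of_int (V $$ (r, j))))"
        by (rule sum.swap)
      also have "\<dots> = (\<Sum>r<n. w r * rat_of_int (\<Sum>j\<in>{0..n}. \<bar>Vminor V j\<bar> * V $$ (r, j)))"
        by (simp add: sum_distrib_left)
      also have "\<dots> = 0" using F_adm_rel[OF V] by simp
      finally have s0: "(\<Sum>j\<in>{0..n}. rat_of_int \<bar>Vminor V j\<bar> * S j) = 0" .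
      have split: "{0..n} = insert 0 {1..n}" by auto
      have "(\<Sum>j\<in>{1..n}. rat_of_int \<bar>Vminor V j\<bar> * S j)
          = (\<Sum>j\<in>{1..n}. if j = a then rat_of_int \<bar>Vminor V j\<bar> * (?L / rat_of_int \<bar>Vminor V j\<bar>) else 0)"
        by (rule sum.cong, auto simp: Sj)
      also have "\<dots> = rat_of_int \<bar>Vminor V a\<bar> * (?L / rat_of_int \<bar>Vminor V a\<bar>)"
        using False a by (simp add: sum.delta)
      also have "\<dots> = ?L" using Vnz[OF a] by simp
      finally have s1: "(\<Sum>j\<in>{1..n}. rat_of_int \<bar>Vminor V j\<bar> * S j) = ?L" .
      have "rat_of_int \<bar>Vminor V 0\<bar> * S 0 + ?L = 0" using s0 s1 unfolding split by simp
      then have "S 0 = - ?L / rat_of_int \<bar>Vminor V 0\<bar>" using V0 by (simp add: field_simps)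
      then show ?thesis using lhs True False by simp
    qed
  qed
qed

lemma part2: assumes s: "\<sigma> permutes {0..n}" and V: "V \<in> F_admissible n"
  shows "tau (perm_cols V \<sigma>) = W_act (tau V) \<sigma>"
proof -
  have Vc: "V \<in> carrier_mat n (Suc n)" and V0: "Vminor V 0 \<noteq> 0" and Vnz: "\<And>j. j \<le> n \<Longrightarrow> Vminor V j \<noteq> 0"
    using V unfolding F_admissible_def by auto
  let ?U = "perm_cols V \<sigma>"
  let ?T = "tau V"
  have Uc: "?U \<in> carrier_mat n (Suc n)" using Vc unfolding perm_cols_def by auto
  have sim: "\<sigma> x \<le> n" if "x \<le> n" for x using permutes_in_image[OF s, of x] that by auto
  have sinj: "\<sigma> x = \<sigma> y \<longleftrightarrow> x = y" for x y using injD[OF permutes_inj[OF s]] by blast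
  have U0: "Vminor ?U 0 \<noteq> 0" using perm_minor[OF s Vc, of 0] Vnz[OF sim[of 0]] by auto
  note TP = tau_prop[OF Vc V0]
  have Wc: "W_act ?T \<sigma> \<in> carrier_mat n n" using TP(1) unfolding W_act_def by auto
  have wdim: "wcol ?T x \<in> carrier_vec n" for x using TP(1) unfolding wcol_def by auto
  have wd: "dim_vec (wcol ?T x) = n" for x using wdim[of x] by auto
  show ?thesis
  proof (rule tau_unique[OF Uc U0 Wc])
    fix k i assume k: "k < n" and i: "i < n"
    let ?a = "\<sigma> (Suc k)" and ?b = "\<sigma> 0" and ?c = "\<sigma> (Suc i)"
    have "(\<Sum>r<n. W_act ?T \<sigma> $$ (r, k) * rat_of_int (?U $$ (r, Suc i)))
      = (\<Sum>r<n. wcol ?T ?a $ r * rat_of_int (V $$ (r, ?c)) - wcol ?T ?b $ r * rat_of_int (V $$ (r, ?c)))"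
      using TP(1) k i wdim Vc unfolding W_act_def perm_cols_def
      by (intro sum.cong refl) (auto simp: algebra_simps index_minus_vec wd)
    also have "\<dots> = (\<Sum>r<n. wcol ?T ?a $ r * rat_of_int (V $$ (r, ?c))) - (\<Sum>r<n. wcol ?T ?b $ r * rat_of_int (V $$ (r, ?c)))"
      by (rule sum_subtractf)
    also have "\<dots> = (if k = i then rat_of_int (Lc V n) / rat_of_int \<bar>Vminor V ?c\<bar> else 0)"
      using KL[OF V sim[of "Suc k"] sim[of "Suc i"]] KL[OF V sim[of 0] sim[of "Suc i"]] using k i sinj[of "Suc k" "Suc i"] sinj[of 0 "Suc i"] sinj[of 0 "Suc k"]
      by auto
    also have "\<dots> = (if k = i then rat_of_int (Lc ?U n) / rat_of_int \<bar>Vminor ?U (Suc i)\<bar> else 0)"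
    proof -
      have e: "\<bar>Vminor ?U (Suc i)\<bar> = \<bar>Vminor V ?c\<bar>" using perm_minor[OF s Vc, of "Suc i"] i by auto
      show ?thesis unfolding perm_Lc[OF s Vc] e ..
    qed
    finally show "(\<Sum>r<n. W_act ?T \<sigma> $$ (r, k) * rat_of_int (?U $$ (r, Suc i)))
      = (if k = i then rat_of_int (Lc ?U n) / rat_of_int \<bar>Vminor ?U (Suc i)\<bar> else 0)" .
  qed
qed

theorem mainTheorem15:
  fixes n :: nat
  shows "(\<forall>A \<in> GLZ n. \<forall>V \<in> F_admissible n. tau (A * V) = dual_mat A * tau V)
       \<and> (\<forall>\<sigma>. \<sigma> permutes {0..n} \<longrightarrow>
            (\<forall>V \<in> F_admissible n. tau (perm_cols V \<sigma>) = W_act (tau V) \<sigma>))"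
  using part1 part2 by blast

end
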